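(* Let $X\subseteq\mathbb{R}^n$ be nonempty, closed and convex, and suppose there is $D_X>0$ with $\|u-v\|^2\le D_X^2$ for all $u,v\in X$. Let $F(x)=\mathbb{E}[F(x,\omega)]$ and assume: (A1) $F$ is $L$-Lipschitz continuous and monotone on $\mathbb{R}^n$; (A2) the solution set $X^*$ of VI$(X,F)$ is nonempty and compact and there is $C>0$ with $\|F(x^* )\|\le C$ for all $x^*\in X^*$; (A4) the state-dependent noise condition described in the context holds with constants $\nu_1,\nu_2\ge0$. Consider the variable sample-size stochastic projected reflected gradient scheme (v-SPRG) $$x_{k+1}=\Pi_X\Big(x_k-\gamma\,\tfrac{1}{N_k}\textstyle\sum_{j=1}^{N_k}F(2x_k-x_{k-1},\omega_{j,k})\Big),\quad k\ge0,$$ with $0<\gamma\le\frac{1}{8\tilde L}$, $\tilde L^2\triangleq L^2+\frac{10\nu_1^2}{N_0}$, and $\{N_k\}$ a non-decreasing sequence satisfying $\sum_{k=1}^\infty\frac{1}{N_k}<M$ for some finite $M$. Let $\bar x_K=\frac{1}{K}\sum_{k=0}^{K-1}x_k$. Then: (a) $\mathbb{E}[G(\bar x_K)]\le\mathcal{O}(1/K)$ for any $K$, i.e. there is a constant $c$ independent of $K$ with $\mathbb{E}[G(\bar x_K)]\le c/K$; (b) if $N_k\triangleq\lfloor k^a\rfloor$ with $a>1$, then the oracle complexity to ensure $\mathbb{E}[G(\bar x_K)]\le\epsilon$ satisfies $\sum_{k=1}^K N_k\le\mathcal{O}(1/\epsilon^{a+1})$.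
   Context: VI$(X,F)$: find $x^*\in X$ with $F(x^* )^T(x-x^* )\ge0$ for all $x\in X$; $X^*$ is its solution set. $\Pi_X$ is Euclidean projection onto $X$. The gap function is $G(x)\triangleq\sup_{y\in X}F(y)^T(x-y)$ for $x\in X$. The scheme uses initial points $x_{-1},x_0\in X$. At iteration $k$ the $N_k$ samples are drawn at $y_k=2x_k-x_{k-1}$. Noise condition (A4): with $\mathcal{F}_k$ the history before iteration $k$'s samples, each sample's error $w=F(y_k,\omega_{j,k})-F(y_k)$ satisfies $\mathbb{E}[w\mid\mathcal{F}_k]=0$ and $\mathbb{E}[\|w\|^2\mid\mathcal{F}_k]\le\nu_1^2\|y_k\|^2+\nu_2^2$ a.s., samples within a batch being independent given the history. The oracle complexity is the total number of sampled map evaluations $\sum_k N_k$ over the iterations needed. *)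

theory Defs
  imports "HOL-Analysis.Analysis" "HOL-Probability.Probability"
begin

definition VI_sol :: "(real^'n) set \<Rightarrow> (real^'n \<Rightarrow> real^'n) \<Rightarrow> (real^'n) set"
  where "VI_sol X F = {xs \<in> X. \<forall>x\<in>X. F xs \<bullet> (x - xs) \<ge> 0}"

definition gap_fun :: "(real^'n) set \<Rightarrow> (real^'n \<Rightarrow> real^'n) \<Rightarrow> real^'n \<Rightarrow> real"
  where "gap_fun X F x = (SUP y\<in>X. F y \<bullet> (x - y))"

definition monotone_map :: "(real^'n \<Rightarrow> real^'n) \<Rightarrow> bool"
  where "monotone_map F \<longleftrightarrow> (\<forall>x y. (F x - F y) \<bullet> (x - y) \<ge> 0)"

text \<open>Index shift: sprg_x ... k is x_k for k \<ge> 0;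
  the point x_{-1} is given separately as xm1.  Fs is the sampled map F(x,omega),
  om j k is the j-th sample (j < N k) of iteration k.\<close>
fun sprg_x :: "(real^'n) set \<Rightarrow> real \<Rightarrow> (nat \<Rightarrow> nat) \<Rightarrow> (real^'n \<Rightarrow> 'w \<Rightarrow> real^'n)
    \<Rightarrow> (nat \<Rightarrow> nat \<Rightarrow> 's \<Rightarrow> 'w) \<Rightarrow> real^'n \<Rightarrow> real^'n \<Rightarrow> nat \<Rightarrow> 's \<Rightarrow> real^'n"
  and sprg_prev :: "(real^'n) set \<Rightarrow> real \<Rightarrow> (nat \<Rightarrow> nat) \<Rightarrow> (real^'n \<Rightarrow> 'w \<Rightarrow> real^'n)
    \<Rightarrow> (nat \<Rightarrow> nat \<Rightarrow> 's \<Rightarrow> 'w) \<Rightarrow> real^'n \<Rightarrow> real^'n \<Rightarrow> nat \<Rightarrow> 's \<Rightarrow> real^'n"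
  where
  "sprg_x X \<gamma> N Fs om xm1 x0 0 s = x0"
| "sprg_x X \<gamma> N Fs om xm1 x0 (Suc k) s =
     closest_point X (sprg_x X \<gamma> N Fs om xm1 x0 k s -
       (\<gamma> / real (N k)) *\<^sub>R (\<Sum>j<N k. Fs (2 *\<^sub>R sprg_x X \<gamma> N Fs om xm1 x0 k s
                                         - sprg_prev X \<gamma> N Fs om xm1 x0 k s) (om j k s)))"
| "sprg_prev X \<gamma> N Fs om xm1 x0 0 s = xm1"
| "sprg_prev X \<gamma> N Fs om xm1 x0 (Suc k) s = sprg_x X \<gamma> N Fs om xm1 x0 k s"

definition sprg_y where
  "sprg_y X \<gamma> N Fs om xm1 x0 k s =
     2 *\<^sub>R sprg_x X \<gamma> N Fs om xm1 x0 k s - sprg_prev X \<gamma> N Fs om xm1 x0 k s"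

definition sprg_xbar where
  "sprg_xbar X \<gamma> N Fs om xm1 x0 K s =
     (1 / real K) *\<^sub>R (\<Sum>k<K. sprg_x X \<gamma> N Fs om xm1 x0 k s)"

end

theory Submission
  imports Defs
begin


lemma polar_aux:
  fixes p q :: "'a::real_inner"
  shows "2 * inner q (p - q) = (norm p)\<^sup>2 - (norm q)\<^sup>2 - (norm (p - q))\<^sup>2"
  by (simp add: power2_norm_eq_inner inner_diff_left inner_diff_right inner_commute algebra_simps)

lemma step_alg:
  fixes a b c d z e0 e1 Fy Fyp :: "'a::real_inner"
  assumes P1: "inner (c - \<gamma> *\<^sub>R (Fy + e1) - d) (z - d) \<le> 0"
    and P2: "inner (b - \<gamma> *\<^sub>R (Fyp + e0) - c) (d - c) \<le> 0"
    and P3: "inner (b - \<gamma> *\<^sub>R (Fyp + e0) - c) (b - c) \<le> 0"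
    and Lip: "norm (Fy - Fyp) \<le> L * norm ((2 *\<^sub>R c - b) - (2 *\<^sub>R b - a))"
    and gp: "\<gamma> > 0" and L0: "L \<ge> 0" and gL: "\<gamma> * L \<le> 1/8"
  shows "2 * \<gamma> * inner Fy ((2 *\<^sub>R c - b) - z) \<le>
     (norm (c - z))\<^sup>2 + (norm (b - a))\<^sup>2 / 2 - (norm (d - z))\<^sup>2 - (norm (c - b))\<^sup>2 / 2
     + 3 * \<gamma>\<^sup>2 * ((norm e1)\<^sup>2 + (norm e0)\<^sup>2) + 2 * \<gamma> * inner e1 (z - (2 *\<^sub>R c - b))"
proof -
  define y where "y = 2 *\<^sub>R c - b"
  define g where "g = Fy + e1"
  define gp' where "gp' = Fyp + e0"
  have s1: "2 * \<gamma> * inner g (d - z) \<le> (norm (c - z))\<^sup>2 - (norm (d - z))\<^sup>2 - (norm (d - c))\<^sup>2"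
  proof -
    have "inner (c - d) (z - d) \<le> \<gamma> * inner g (z - d)"
      using P1 unfolding g_def by (simp add: inner_diff_left inner_scaleR_left)
    moreover have "2 * inner (d - c) (z - d) = (norm (c - z))\<^sup>2 - (norm (d - z))\<^sup>2 - (norm (d - c))\<^sup>2"
      by (simp add: power2_norm_eq_inner inner_diff_left inner_diff_right inner_commute algebra_simps)
    moreover have "inner g (d - z) = - inner g (z - d)" by (simp add: inner_diff_right)
    moreover have "inner (c - d) (z - d) = - inner (d - c) (z - d)" by (simp add: inner_diff_left)
    ultimately show ?thesis by (simp add: algebra_simps)
  qed
  have s2: "\<gamma> * inner gp' (d - y) \<ge> inner (b - c) (d - y)"
  proof -
    have dy: "d - y = (d - c) + (b - c)" unfolding y_def by (simp add: algebra_simps scaleR_2)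
    have "inner (b - \<gamma> *\<^sub>R gp' - c) (d - y) = inner (b - \<gamma> *\<^sub>R gp' - c) (d - c) + inner (b - \<gamma> *\<^sub>R gp' - c) (b - c)"
      unfolding dy by (rule inner_add_right)
    hence "inner (b - \<gamma> *\<^sub>R gp' - c) (d - y) \<le> 0"
      using P2 P3 unfolding gp'_def by linarith
    thus ?thesis by (simp add: inner_diff_left inner_scaleR_left)
  qed
  have s3: "-2 * inner (b - c) (d - y) = (norm (d - c))\<^sup>2 - (norm (c - b))\<^sup>2 - (norm (d - y))\<^sup>2"
  proof -
    have dy: "d - y = (d - c) - (c - b)" unfolding y_def by (simp add: algebra_simps scaleR_2)
    have bc: "inner (b - c) (d - y) = - inner (c - b) (d - y)" by (metis inner_minus_left minus_diff_eq)
    show ?thesis unfolding bc using polar_aux[of "c - b" "d - c"] unfolding dy by simp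
  qed
  have s4: "2 * \<gamma> * norm (g - gp') * norm (d - y) \<le> \<gamma>\<^sup>2 * (norm (g - gp'))\<^sup>2 + (norm (d - y))\<^sup>2"
    using sum_squares_bound[of "\<gamma> * norm (g - gp')" "norm (d - y)"]
    by (simp add: power2_eq_square algebra_simps)
  have s5: "- (2 * \<gamma> * inner (g - gp') (d - y)) \<le> 2 * \<gamma> * norm (g - gp') * norm (d - y)"
  proof -
    have "- inner (g - gp') (d - y) \<le> norm (g - gp') * norm (d - y)"
      using Cauchy_Schwarz_ineq2[of "g - gp'" "d - y"] by linarith
    hence "2 * \<gamma> * (- inner (g - gp') (d - y)) \<le> 2 * \<gamma> * (norm (g - gp') * norm (d - y))"
      using gp by (intro mult_left_mono) auto
    thus ?thesis by (simp only: mult_minus_right mult.assoc)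
  qed
  have ident: "inner Fy (y - z) = inner g (d - z) - inner gp' (d - y) - inner (g - gp') (d - y) + inner e1 (z - y)"
    unfolding g_def gp'_def by (simp add: inner_diff_left inner_diff_right inner_add_left algebra_simps)
  have s6: "(norm (g - gp'))\<^sup>2 \<le> 3 * (norm (Fy - Fyp))\<^sup>2 + 3 * (norm e1)\<^sup>2 + 3 * (norm e0)\<^sup>2"
  proof -
    have "g - gp' = (Fy - Fyp) + e1 - e0" unfolding g_def gp'_def by (simp add: algebra_simps)
    moreover have "norm ((Fy - Fyp) + e1 - e0) \<le> norm ((Fy - Fyp) + e1) + norm e0" by (rule norm_triangle_ineq4)
    moreover have "norm ((Fy - Fyp) + e1) \<le> norm (Fy - Fyp) + norm e1" by (rule norm_triangle_ineq)
    ultimately have "norm (g - gp') \<le> norm (Fy - Fyp) + norm e1 + norm e0" by simp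
    hence "(norm (g - gp'))\<^sup>2 \<le> (norm (Fy - Fyp) + norm e1 + norm e0)\<^sup>2"
      by (simp add: power_mono)
    also have "\<dots> \<le> 3 * (norm (Fy - Fyp))\<^sup>2 + 3 * (norm e1)\<^sup>2 + 3 * (norm e0)\<^sup>2"
      using sum_squares_bound[of "norm (Fy - Fyp)" "norm e1"] sum_squares_bound[of "norm (Fy - Fyp)" "norm e0"]
        sum_squares_bound[of "norm e1" "norm e0"]
      by (simp add: power2_eq_square algebra_simps)
    finally show ?thesis .
  qed
  have s7: "(norm (Fy - Fyp))\<^sup>2 \<le> L\<^sup>2 * (8 * (norm (c - b))\<^sup>2 + 2 * (norm (b - a))\<^sup>2)"
  proof -
    have eq: "(2 *\<^sub>R c - b) - (2 *\<^sub>R b - a) = 2 *\<^sub>R (c - b) - (b - a)" by (simp add: algebra_simps)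
    have "norm (2 *\<^sub>R (c - b) - (b - a)) \<le> norm (2 *\<^sub>R (c - b)) + norm (b - a)"
      by (rule norm_triangle_ineq4)
    hence "norm (2 *\<^sub>R (c - b) - (b - a)) \<le> 2 * norm (c - b) + norm (b - a)" by simp
    hence "(norm (2 *\<^sub>R (c - b) - (b - a)))\<^sup>2 \<le> (2 * norm (c - b) + norm (b - a))\<^sup>2"
      by (simp add: power_mono)
    also have "\<dots> \<le> 8 * (norm (c - b))\<^sup>2 + 2 * (norm (b - a))\<^sup>2"
      using sum_squares_bound[of "2 * norm (c - b)" "norm (b - a)"]
      by (simp add: power2_eq_square algebra_simps)
    finally have A: "(norm ((2 *\<^sub>R c - b) - (2 *\<^sub>R b - a)))\<^sup>2 \<le> 8 * (norm (c - b))\<^sup>2 + 2 * (norm (b - a))\<^sup>2"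
      unfolding eq .
    have "(norm (Fy - Fyp))\<^sup>2 \<le> (L * norm ((2 *\<^sub>R c - b) - (2 *\<^sub>R b - a)))\<^sup>2"
      using Lip by (simp add: power_mono)
    also have "\<dots> = L\<^sup>2 * (norm ((2 *\<^sub>R c - b) - (2 *\<^sub>R b - a)))\<^sup>2" by (simp add: power_mult_distrib)
    also have "\<dots> \<le> L\<^sup>2 * (8 * (norm (c - b))\<^sup>2 + 2 * (norm (b - a))\<^sup>2)"
      using A by (simp add: mult_left_mono)
    finally show ?thesis .
  qed
  have gL2: "\<gamma>\<^sup>2 * L\<^sup>2 \<le> 1/64"
  proof -
    have "(\<gamma> * L)\<^sup>2 \<le> (1/8)\<^sup>2" using gL gp L0 by (intro power_mono) auto
    moreover have "(1/8::real)\<^sup>2 = 1/64" by (simp add: power2_eq_square)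
    ultimately show ?thesis by (simp only: power_mult_distrib)
  qed
  have s8: "\<gamma>\<^sup>2 * (norm (g - gp'))\<^sup>2 \<le> 3/8 * (norm (c - b))\<^sup>2 + 3/32 * (norm (b - a))\<^sup>2
              + 3 * \<gamma>\<^sup>2 * ((norm e1)\<^sup>2 + (norm e0)\<^sup>2)"
  proof -
    have "\<gamma>\<^sup>2 * (norm (g - gp'))\<^sup>2 \<le> \<gamma>\<^sup>2 * (3 * (L\<^sup>2 * (8 * (norm (c - b))\<^sup>2 + 2 * (norm (b - a))\<^sup>2)) + 3 * (norm e1)\<^sup>2 + 3 * (norm e0)\<^sup>2)"
      using s6 s7 by (intro mult_left_mono) auto
    also have "\<dots> = 24 * (\<gamma>\<^sup>2 * L\<^sup>2) * (norm (c - b))\<^sup>2 + 6 * (\<gamma>\<^sup>2 * L\<^sup>2) * (norm (b - a))\<^sup>2 + 3 * \<gamma>\<^sup>2 * ((norm e1)\<^sup>2 + (norm e0)\<^sup>2)"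
      by (simp add: algebra_simps)
    also have "\<dots> \<le> 24 * (1/64) * (norm (c - b))\<^sup>2 + 6 * (1/64) * (norm (b - a))\<^sup>2 + 3 * \<gamma>\<^sup>2 * ((norm e1)\<^sup>2 + (norm e0)\<^sup>2)"
      using gL2 by (intro add_mono mult_right_mono mult_left_mono) auto
    finally show ?thesis by simp
  qed
  have "2 * \<gamma> * inner Fy (y - z) = 2 * \<gamma> * inner g (d - z) - 2 * (\<gamma> * inner gp' (d - y)) - 2 * \<gamma> * inner (g - gp') (d - y) + 2 * \<gamma> * inner e1 (z - y)"
  proof -
    have r: "A = B - C - D + E \<Longrightarrow> 2 * \<gamma> * A = 2 * \<gamma> * B - 2 * (\<gamma> * C) - 2 * \<gamma> * D + 2 * \<gamma> * E" for A B C D E :: real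
      by (simp add: right_diff_distrib distrib_left mult.assoc)
    show ?thesis by (rule r[OF ident])
  qed
  also have "\<dots> \<le> ((norm (c - z))\<^sup>2 - (norm (d - z))\<^sup>2 - (norm (d - c))\<^sup>2) + ((norm (d - c))\<^sup>2 - (norm (c - b))\<^sup>2 - (norm (d - y))\<^sup>2)
      + (\<gamma>\<^sup>2 * (norm (g - gp'))\<^sup>2 + (norm (d - y))\<^sup>2) + 2 * \<gamma> * inner e1 (z - y)"
    using s1 s2 s3 s4 s5 by linarith
  also have "\<dots> \<le> (norm (c - z))\<^sup>2 + (norm (b - a))\<^sup>2 / 2 - (norm (d - z))\<^sup>2 - (norm (c - b))\<^sup>2 / 2
     + 3 * \<gamma>\<^sup>2 * ((norm e1)\<^sup>2 + (norm e0)\<^sup>2) + 2 * \<gamma> * inner e1 (z - y)"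
    using s8 zero_le_power2[of "norm (b - a)"] zero_le_power2[of "norm (c - b)"] by linarith
  finally show ?thesis unfolding y_def .
qed

lemma sum_step:
  fixes xs pv e :: "nat \<Rightarrow> 'a::euclidean_space" and F :: "'a \<Rightarrow> 'a"
  assumes cX: "convex X" and clX: "closed X"
    and xsX: "\<And>k. xs k \<in> X" and zX: "z \<in> X"
    and pvS: "\<And>k. pv (Suc k) = xs k"
    and rec: "\<And>k. xs (Suc k) = closest_point X (xs k - \<gamma> *\<^sub>R (F (2 *\<^sub>R xs k - pv k) + e k))"
    and Lip: "\<And>u v. norm (F u - F v) \<le> L * norm (u - v)"
    and gp: "\<gamma> > 0" and L0: "L \<ge> 0" and gL: "\<gamma> * L \<le> 1/8"
  shows "2 * \<gamma> * (\<Sum>m<n. inner (F (2 *\<^sub>R xs (Suc m) - pv (Suc m))) ((2 *\<^sub>R xs (Suc m) - pv (Suc m)) - z))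
     \<le> (norm (xs 1 - z))\<^sup>2 + (norm (xs 0 - pv 0))\<^sup>2 / 2 - (norm (xs (Suc n) - z))\<^sup>2 - (norm (xs n - pv n))\<^sup>2 / 2
       + 3 * \<gamma>\<^sup>2 * (\<Sum>m<n. (norm (e (Suc m)))\<^sup>2 + (norm (e m))\<^sup>2)
       + 2 * \<gamma> * (\<Sum>m<n. inner (e (Suc m)) (z - (2 *\<^sub>R xs (Suc m) - pv (Suc m))))"
proof (induction n)
  case 0
  then show ?case by simp
next
  case (Suc m)
  define a where "a = pv m"
  define b where "b = xs m"
  define c where "c = xs (Suc m)"
  define d where "d = xs (Suc (Suc m))"
  have pvc: "pv (Suc m) = b" "pv (Suc (Suc m)) = c" using pvS unfolding b_def c_def by auto
  have dd: "d = closest_point X (c - \<gamma> *\<^sub>R (F (2 *\<^sub>R c - b) + e (Suc m)))"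
    unfolding d_def c_def b_def using rec[of "Suc m"] pvS[of m] by simp
  have cc: "c = closest_point X (b - \<gamma> *\<^sub>R (F (2 *\<^sub>R b - a) + e m))"
    unfolding a_def c_def b_def using rec[of m] by simp
  have P1: "inner (c - \<gamma> *\<^sub>R (F (2 *\<^sub>R c - b) + e (Suc m)) - d) (z - d) \<le> 0"
    unfolding dd by (rule closest_point_dot[OF cX clX zX])
  have P2: "inner (b - \<gamma> *\<^sub>R (F (2 *\<^sub>R b - a) + e m) - c) (d - c) \<le> 0"
    unfolding cc by (rule closest_point_dot[OF cX clX]) (simp add: d_def xsX)
  have P3: "inner (b - \<gamma> *\<^sub>R (F (2 *\<^sub>R b - a) + e m) - c) (b - c) \<le> 0"
    unfolding cc by (rule closest_point_dot[OF cX clX]) (simp add: b_def xsX)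
  have st: "2 * \<gamma> * inner (F (2 *\<^sub>R c - b)) ((2 *\<^sub>R c - b) - z) \<le>
     (norm (c - z))\<^sup>2 + (norm (b - a))\<^sup>2 / 2 - (norm (d - z))\<^sup>2 - (norm (c - b))\<^sup>2 / 2
     + 3 * \<gamma>\<^sup>2 * ((norm (e (Suc m)))\<^sup>2 + (norm (e m))\<^sup>2) + 2 * \<gamma> * inner (e (Suc m)) (z - (2 *\<^sub>R c - b))"
    by (rule step_alg[OF P1 P2 P3 Lip gp L0 gL])
  show ?case
    using Suc.IH st unfolding a_def b_def c_def d_def pvc[unfolded b_def c_def]
    by (simp add: distrib_left pvS)
qed

lemma det_bound:
  fixes xs pv e :: "nat \<Rightarrow> 'a::euclidean_space" and F :: "'a \<Rightarrow> 'a"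
  assumes cX: "convex X" and clX: "closed X"
    and xsX: "\<And>k. xs k \<in> X" and zX: "z \<in> X" and pv0X: "pv 0 \<in> X"
    and pvS: "\<And>k. pv (Suc k) = xs k"
    and rec: "\<And>k. xs (Suc k) = closest_point X (xs k - \<gamma> *\<^sub>R (F (2 *\<^sub>R xs k - pv k) + e k))"
    and Lip: "\<And>u v. norm (F u - F v) \<le> L * norm (u - v)"
    and mono: "\<And>u v. inner (F u - F v) (u - v) \<ge> 0"
    and gp: "\<gamma> > 0" and L0: "L \<ge> 0" and gL: "\<gamma> * L \<le> 1/8"
    and diam: "\<And>u v. u \<in> X \<Longrightarrow> v \<in> X \<Longrightarrow> norm (u - v) \<le> DX"
    and Rb: "\<And>u. u \<in> X \<Longrightarrow> norm u \<le> R"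
    and BFb: "\<And>u. u \<in> X \<Longrightarrow> norm (F u) \<le> BF"
    and B0b: "inner (F (2 *\<^sub>R xs 0 - pv 0)) ((2 *\<^sub>R xs 0 - pv 0) - z) \<le> B0"
  shows "(\<Sum>k<Suc n. inner (F z) (xs k - z)) \<le> BF * DX + B0 + 3 * DX\<^sup>2 / (4 * \<gamma>)
     + 3 * \<gamma> * (\<Sum>k<Suc n. (norm (e k))\<^sup>2) + R * norm (\<Sum>m<n. e (Suc m))
     - (\<Sum>m<n. inner (e (Suc m)) (2 *\<^sub>R xs (Suc m) - pv (Suc m)))"
proof -
  define yy where "yy k = 2 *\<^sub>R xs k - pv k" for k
  define A where "A = (\<Sum>m<n. inner (F (yy (Suc m))) (yy (Suc m) - z))"
  define E where "E = (\<Sum>k<Suc n. (norm (e k))\<^sup>2)"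
  define S where "S = (\<Sum>m<n. e (Suc m))"
  define T where "T = (\<Sum>m<n. inner (e (Suc m)) (yy (Suc m)))"
  have DX0: "DX \<ge> 0" using diam[OF zX zX] by simp
  have st: "2 * \<gamma> * A
     \<le> (norm (xs 1 - z))\<^sup>2 + (norm (xs 0 - pv 0))\<^sup>2 / 2 - (norm (xs (Suc n) - z))\<^sup>2 - (norm (xs n - pv n))\<^sup>2 / 2
       + 3 * \<gamma>\<^sup>2 * (\<Sum>m<n. (norm (e (Suc m)))\<^sup>2 + (norm (e m))\<^sup>2)
       + 2 * \<gamma> * (\<Sum>m<n. inner (e (Suc m)) (z - yy (Suc m)))"
    unfolding A_def yy_def by (rule sum_step[where xs=xs and pv=pv and e=e and F=F and X=X and z=z, OF cX clX xsX zX pvS rec Lip gp L0 gL])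
  have n1: "(norm (xs 1 - z))\<^sup>2 \<le> DX\<^sup>2"
    using diam[OF xsX zX] by (simp add: power_mono)
  have n2: "(norm (xs 0 - pv 0))\<^sup>2 \<le> DX\<^sup>2"
    using diam[OF xsX pv0X] by (simp add: power_mono)
  have e1: "(\<Sum>m<n. (norm (e (Suc m)))\<^sup>2) \<le> E"
    unfolding E_def sum.lessThan_Suc_shift by simp
  have e2: "(\<Sum>m<n. (norm (e m))\<^sup>2) \<le> E"
    unfolding E_def sum.lessThan_Suc by simp
  have esum: "(\<Sum>m<n. (norm (e (Suc m)))\<^sup>2 + (norm (e m))\<^sup>2) \<le> 2 * E"
    using e1 e2 by (simp add: sum.distrib)
  have nsum: "(\<Sum>m<n. inner (e (Suc m)) (z - yy (Suc m))) = inner S z - T"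
    unfolding S_def T_def by (simp add: inner_diff_right inner_sum_left sum_subtractf)
  have zS: "inner S z \<le> R * norm S"
  proof -
    have "inner S z \<le> norm S * norm z" by (metis abs_le_D1 Cauchy_Schwarz_ineq2)
    also have "\<dots> \<le> norm S * R" using Rb[OF zX] by (simp add: mult_left_mono)
    finally show ?thesis by (simp add: mult.commute)
  qed
  have g2: "3 * \<gamma>\<^sup>2 * (\<Sum>m<n. (norm (e (Suc m)))\<^sup>2 + (norm (e m))\<^sup>2) \<le> 3 * \<gamma>\<^sup>2 * (2 * E)"
    using esum by (intro mult_left_mono) auto
  have Ab: "2 * \<gamma> * A \<le> 3/2 * DX\<^sup>2 + 3 * \<gamma>\<^sup>2 * (2 * E) + 2 * \<gamma> * (R * norm S - T)"
  proof -
    have "2 * \<gamma> * (\<Sum>m<n. inner (e (Suc m)) (z - yy (Suc m))) \<le> 2 * \<gamma> * (R * norm S - T)"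
      unfolding nsum using zS gp by (intro mult_left_mono) auto
    moreover note st n1 n2 g2 zero_le_power2[of "norm (xs (Suc n) - z)"] zero_le_power2[of "norm (xs n - pv n)"]
    ultimately show ?thesis by linarith
  qed
  hence Ab2: "A \<le> 3 * DX\<^sup>2 / (4 * \<gamma>) + 3 * \<gamma> * E + R * norm S - T"
    using gp by (simp add: field_simps power2_eq_square)
  have mono_k: "inner (F z) (yy k - z) \<le> inner (F (yy k)) (yy k - z)" for k
    using mono[of "yy k" z] by (simp add: inner_diff_left)
  have s1: "(\<Sum>k<Suc n. inner (F z) (yy k - z)) \<le> (\<Sum>k<Suc n. inner (F (yy k)) (yy k - z))"
    by (intro sum_mono mono_k)
  have s2: "(\<Sum>k<Suc n. inner (F (yy k)) (yy k - z)) \<le> B0 + A"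
    unfolding sum.lessThan_Suc_shift A_def using B0b unfolding yy_def by simp
  have tele: "(\<Sum>k<Suc n. yy k - xs k) = xs n - pv 0"
  proof -
    have "(\<Sum>k<Suc n. yy k - xs k) = (\<Sum>k<Suc n. pv (Suc k) - pv k)"
      unfolding yy_def pvS by (simp add: scaleR_2 algebra_simps)
    also have "\<dots> = pv (Suc n) - pv 0" by (rule sum_lessThan_telescope)
    finally show ?thesis using pvS by simp
  qed
  have s3: "(\<Sum>k<Suc n. inner (F z) (xs k - z)) = (\<Sum>k<Suc n. inner (F z) (yy k - z)) - inner (F z) (xs n - pv 0)"
  proof -
    have "(\<Sum>k<Suc n. inner (F z) (yy k - z)) - (\<Sum>k<Suc n. inner (F z) (xs k - z))
        = (\<Sum>k<Suc n. inner (F z) (yy k - xs k))"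
      by (simp add: sum_subtractf[symmetric] inner_diff_right)
    also have "\<dots> = inner (F z) (xs n - pv 0)" by (simp only: inner_sum_right[symmetric] tele)
    finally show ?thesis by simp
  qed
  have s4: "- inner (F z) (xs n - pv 0) \<le> BF * DX"
  proof -
    have "- inner (F z) (xs n - pv 0) \<le> norm (F z) * norm (xs n - pv 0)"
      using Cauchy_Schwarz_ineq2[of "F z" "xs n - pv 0"] by linarith
    also have "\<dots> \<le> BF * DX"
    proof -
      have BF0: "0 \<le> BF" using norm_ge_zero[of "F z"] BFb[OF zX] by linarith
      show ?thesis using BFb[OF zX] diam[OF xsX pv0X] BF0 by (intro mult_mono) auto
    qed
    finally show ?thesis .
  qed
  show ?thesis
    using s1 s2 s3 s4 Ab2 unfolding E_def S_def T_def yy_def by linarith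
qed



lemma sfs_of_prob:
  assumes "prob_space M" "subalgebra M G"
  shows "sigma_finite_subalgebra M G"
proof -
  interpret prob_space M by fact
  have "finite_measure_subalgebra M G"
    unfolding finite_measure_subalgebra_def finite_measure_subalgebra_axioms_def
    using assms(2) finite_measure_axioms by simp
  thus ?thesis by (rule finite_measure_subalgebra_is_sigma_finite)
qed

lemma meas_nth:
  fixes V :: "'s \<Rightarrow> real^'n"
  assumes "V \<in> borel_measurable G"
  shows "(\<lambda>s. V s $ i) \<in> borel_measurable G"
proof -
  have "(\<lambda>x::real^'n. x $ i) \<in> borel_measurable borel"
    by (rule borel_measurable_continuous_onI[OF linear_continuous_on[OF bounded_linear_vec_nth]])
  from measurable_compose[OF assms this] show ?thesis by simp
qed

lemma int_inner_sq:
  fixes a b :: "'s \<Rightarrow> 'v::euclidean_space"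
  assumes am: "a \<in> borel_measurable M" and bm: "b \<in> borel_measurable M"
    and ai: "integrable M (\<lambda>s. (norm (a s))\<^sup>2)" and bi: "integrable M (\<lambda>s. (norm (b s))\<^sup>2)"
  shows "integrable M (\<lambda>s. inner (a s) (b s))"
proof -
  have I1: "integrable M (\<lambda>s. ((norm (a s))\<^sup>2 + (norm (b s))\<^sup>2) / 2)"
    using ai bi by auto
  have m1: "(\<lambda>s. inner (a s) (b s)) \<in> borel_measurable M" using am bm by measurable
  have "AE x in M. norm (inner (a x) (b x)) \<le> norm (((norm (a x))\<^sup>2 + (norm (b x))\<^sup>2) / 2)"
  proof (rule AE_I2)
    fix x
    have "\<bar>inner (a x) (b x)\<bar> \<le> norm (a x) * norm (b x)" by (rule Cauchy_Schwarz_ineq2)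
    also have "\<dots> \<le> ((norm (a x))\<^sup>2 + (norm (b x))\<^sup>2) / 2"
      using sum_squares_bound[of "norm (a x)" "norm (b x)"] by (simp add: power2_eq_square)
    finally show "norm (inner (a x) (b x)) \<le> norm (((norm (a x))\<^sup>2 + (norm (b x))\<^sup>2) / 2)" by simp
  qed
  from Bochner_Integration.integrable_bound[OF I1 m1 this] show ?thesis .
qed

lemma int_comp_sq:
  fixes a b :: "'s \<Rightarrow> real^'n"
  assumes am: "a \<in> borel_measurable M" and bm: "b \<in> borel_measurable M"
    and ai: "integrable M (\<lambda>s. (norm (a s))\<^sup>2)" and bi: "integrable M (\<lambda>s. (norm (b s))\<^sup>2)"
  shows "integrable M (\<lambda>s. a s $ i * b s $ i)"
proof -
  have I1: "integrable M (\<lambda>s. ((norm (a s))\<^sup>2 + (norm (b s))\<^sup>2) / 2)"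
    using ai bi by auto
  have m1: "(\<lambda>s. a s $ i * b s $ i) \<in> borel_measurable M"
    using meas_nth[OF am, of i] meas_nth[OF bm, of i] by measurable
  have "AE x in M. norm (a x $ i * b x $ i) \<le> norm (((norm (a x))\<^sup>2 + (norm (b x))\<^sup>2) / 2)"
  proof (rule AE_I2)
    fix x
    have "\<bar>a x $ i * b x $ i\<bar> \<le> norm (a x) * norm (b x)"
      unfolding abs_mult by (intro mult_mono component_le_norm_cart) auto
    also have "\<dots> \<le> ((norm (a x))\<^sup>2 + (norm (b x))\<^sup>2) / 2"
      using sum_squares_bound[of "norm (a x)" "norm (b x)"] by (simp add: power2_eq_square)
    finally show "norm (a x $ i * b x $ i) \<le> norm (((norm (a x))\<^sup>2 + (norm (b x))\<^sup>2) / 2)" by simp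
  qed
  from Bochner_Integration.integrable_bound[OF I1 m1 this] show ?thesis .
qed

lemma inner_zero_cond:
  fixes V w :: "'s \<Rightarrow> real^'n"
  assumes sfs: "sigma_finite_subalgebra M G"
    and Vm: "V \<in> borel_measurable G" and wm: "w \<in> borel_measurable M"
    and ce: "\<And>i. AE s in M. real_cond_exp M G (\<lambda>s. w s $ i) s = 0"
    and int: "\<And>i. integrable M (\<lambda>s. V s $ i * w s $ i)"
  shows "(\<integral>s. inner (V s) (w s) \<partial>M) = 0"
proof -
  interpret sigma_finite_subalgebra M G by fact
  have "(\<integral>s. inner (V s) (w s) \<partial>M) = (\<integral>s. (\<Sum>i\<in>UNIV. V s $ i * w s $ i) \<partial>M)"
    unfolding inner_vec_def by simp
  also have "\<dots> = (\<Sum>i\<in>UNIV. (\<integral>s. V s $ i * w s $ i \<partial>M))"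
    using int by (simp add: integral_sum)
  also have "\<dots> = 0"
  proof (rule sum.neutral, rule ballI)
    fix i
    have "(\<integral>s. V s $ i * w s $ i \<partial>M) = (\<integral>s. V s $ i * real_cond_exp M G (\<lambda>s. w s $ i) s \<partial>M)"
      by (rule real_cond_exp_intg(2)[symmetric]) (use int meas_nth[OF Vm] meas_nth[OF wm] in auto)
    also have "\<dots> = (\<integral>s. 0 \<partial>M)"
      by (rule integral_cong_AE) (use ce[of i] meas_nth[OF Vm] in \<open>auto intro: measurable_from_subalg[OF subalg]\<close>)
    finally show "(\<integral>s. V s $ i * w s $ i \<partial>M) = 0" by simp
  qed
  finally show ?thesis .
qed

lemma sq_bound:
  fixes w :: "'s \<Rightarrow> 'v::euclidean_space"
  assumes P: "prob_space M" and sfs: "sigma_finite_subalgebra M G"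
    and wm: "w \<in> borel_measurable M"
    and b: "AE s in M. nn_cond_exp M G (\<lambda>s. ennreal ((norm (w s))\<^sup>2)) s \<le> ennreal \<sigma>2"
    and s0: "\<sigma>2 \<ge> 0"
  shows "integrable M (\<lambda>s. (norm (w s))\<^sup>2)" "(\<integral>s. (norm (w s))\<^sup>2 \<partial>M) \<le> \<sigma>2"
proof -
  interpret sigma_finite_subalgebra M G by fact
  interpret prob_space M by fact
  have m: "(\<lambda>s. (norm (w s))\<^sup>2) \<in> borel_measurable M" using wm by measurable
  have "(\<integral>\<^sup>+s. ennreal ((norm (w s))\<^sup>2) \<partial>M) = (\<integral>\<^sup>+s. 1 * ennreal ((norm (w s))\<^sup>2) \<partial>M)" by simp
  also have "\<dots> = (\<integral>\<^sup>+s. 1 * nn_cond_exp M G (\<lambda>s. ennreal ((norm (w s))\<^sup>2)) s \<partial>M)"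
    by (rule nn_cond_exp_intg[symmetric]) (use m in auto)
  also have "\<dots> \<le> (\<integral>\<^sup>+s. ennreal \<sigma>2 \<partial>M)"
    using b by (intro nn_integral_mono_AE) auto
  also have "\<dots> = ennreal \<sigma>2" by (simp add: emeasure_space_1)
  finally have nb: "(\<integral>\<^sup>+s. ennreal ((norm (w s))\<^sup>2) \<partial>M) \<le> ennreal \<sigma>2" .
  show I: "integrable M (\<lambda>s. (norm (w s))\<^sup>2)"
  proof (rule integrableI_bounded)
    show "(\<lambda>s. (norm (w s))\<^sup>2) \<in> borel_measurable M" by (rule m)
    have "(\<integral>\<^sup>+s. ennreal (norm ((norm (w s))\<^sup>2)) \<partial>M) = (\<integral>\<^sup>+s. ennreal ((norm (w s))\<^sup>2) \<partial>M)" by simp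
    also have "\<dots> < \<infinity>" using nb by (simp add: le_less_trans)
    finally show "(\<integral>\<^sup>+s. ennreal (norm ((norm (w s))\<^sup>2)) \<partial>M) < \<infinity>" .
  qed
  have "ennreal (\<integral>s. (norm (w s))\<^sup>2 \<partial>M) = (\<integral>\<^sup>+s. ennreal ((norm (w s))\<^sup>2) \<partial>M)"
    by (rule nn_integral_eq_integral[OF I, symmetric]) auto
  with nb have "ennreal (\<integral>s. (norm (w s))\<^sup>2 \<partial>M) \<le> ennreal \<sigma>2" by simp
  with s0 show "(\<integral>s. (norm (w s))\<^sup>2 \<partial>M) \<le> \<sigma>2" by (simp add: ennreal_le_iff)
qed

lemma uncorr_int:
  assumes sfs: "sigma_finite_subalgebra M G" and I: "integrable M f"
    and ce: "AE s in M. real_cond_exp M G f s = 0"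
  shows "(\<integral>s. f s \<partial>M) = 0"
proof -
  interpret sigma_finite_subalgebra M G by fact
  have "(\<integral>s. f s \<partial>M) = (\<integral>s. real_cond_exp M G f s \<partial>M)" using real_cond_exp_int(2)[OF I] by simp
  also have "\<dots> = (\<integral>s. 0 \<partial>M)" by (rule integral_cong_AE) (use ce in auto)
  finally show ?thesis by simp
qed

lemma orth_sum:
  fixes ws :: "nat \<Rightarrow> 's \<Rightarrow> 'v::euclidean_space"
  assumes fin: "finite I"
    and m: "\<And>j. j \<in> I \<Longrightarrow> ws j \<in> borel_measurable M"
    and sq: "\<And>j. j \<in> I \<Longrightarrow> integrable M (\<lambda>s. (norm (ws j s))\<^sup>2)"
    and orth: "\<And>i j. i \<in> I \<Longrightarrow> j \<in> I \<Longrightarrow> i \<noteq> j \<Longrightarrow> (\<integral>s. inner (ws i s) (ws j s) \<partial>M) = 0"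
  shows "integrable M (\<lambda>s. (norm (\<Sum>j\<in>I. ws j s))\<^sup>2)"
    "(\<integral>s. (norm (\<Sum>j\<in>I. ws j s))\<^sup>2 \<partial>M) = (\<Sum>j\<in>I. \<integral>s. (norm (ws j s))\<^sup>2 \<partial>M)"
proof -
  have eq: "(norm (\<Sum>j\<in>I. ws j s))\<^sup>2 = (\<Sum>i\<in>I. \<Sum>j\<in>I. inner (ws i s) (ws j s))" for s
    by (simp add: power2_norm_eq_inner inner_sum_left inner_sum_right) (rule sum.swap)
  have ii: "integrable M (\<lambda>s. inner (ws i s) (ws j s))" if "i \<in> I" "j \<in> I" for i j
    by (rule int_inner_sq) (use that m sq in auto)
  show "integrable M (\<lambda>s. (norm (\<Sum>j\<in>I. ws j s))\<^sup>2)"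
    unfolding eq using ii by (intro Bochner_Integration.integrable_sum) auto
  have "(\<integral>s. (norm (\<Sum>j\<in>I. ws j s))\<^sup>2 \<partial>M) = (\<Sum>i\<in>I. \<Sum>j\<in>I. \<integral>s. inner (ws i s) (ws j s) \<partial>M)"
    unfolding eq using ii by (simp add: Bochner_Integration.integral_sum Bochner_Integration.integrable_sum)
  also have "\<dots> = (\<Sum>i\<in>I. \<integral>s. inner (ws i s) (ws i s) \<partial>M)"
  proof (rule sum.cong[OF refl])
    fix i assume iI: "i \<in> I"
    have "(\<Sum>j\<in>I. \<integral>s. inner (ws i s) (ws j s) \<partial>M) = (\<Sum>j\<in>I. if i = j then \<integral>s. inner (ws i s) (ws i s) \<partial>M else 0)"
      using orth iI by (intro sum.cong) auto
    also have "\<dots> = (\<integral>s. inner (ws i s) (ws i s) \<partial>M)" using iI fin by simp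
    finally show "(\<Sum>j\<in>I. \<integral>s. inner (ws i s) (ws j s) \<partial>M) = (\<integral>s. inner (ws i s) (ws i s) \<partial>M)" .
  qed
  also have "\<dots> = (\<Sum>j\<in>I. \<integral>s. (norm (ws j s))\<^sup>2 \<partial>M)"
    by (simp add: power2_norm_eq_inner)
  finally show "(\<integral>s. (norm (\<Sum>j\<in>I. ws j s))\<^sup>2 \<partial>M) = (\<Sum>j\<in>I. \<integral>s. (norm (ws j s))\<^sup>2 \<partial>M)" .
qed



lemma partB:
  fixes I :: "nat \<Rightarrow> real" and N :: "nat \<Rightarrow> nat" and c a :: real
  assumes c0: "c \<ge> 0" and IK: "\<forall>K\<ge>1. I K \<le> c / real K" and a1: "a > 1"
    and Nd: "\<forall>k\<ge>1. N k = nat \<lfloor>real k powr a\<rfloor>"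
  shows "\<exists>c'. \<forall>\<epsilon>. 0 < \<epsilon> \<and> \<epsilon> \<le> 1 \<longrightarrow>
           (\<exists>K\<ge>1. I K \<le> \<epsilon> \<and> real (\<Sum>k=1..K. N k) \<le> c' / \<epsilon> powr (a + 1))"
proof (rule exI[of _ "(c + 2) powr (a + 1)"], intro allI impI)
  fix \<epsilon> :: real assume eps: "0 < \<epsilon> \<and> \<epsilon> \<le> 1"
  define K where "K = nat \<lceil>c / \<epsilon>\<rceil> + 1"
  have K1: "K \<ge> 1" unfolding K_def by simp
  have Kge: "real K \<ge> c / \<epsilon>" unfolding K_def by linarith
  have Kle: "real K \<le> c / \<epsilon> + 2" unfolding K_def using c0 eps by (simp add: of_nat_nat) linarith
  have Kpos: "real K > 0" using K1 by simp
  have "I K \<le> c / real K" using IK K1 by auto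
  also have "\<dots> \<le> \<epsilon>"
    using Kge eps Kpos by (simp add: divide_le_eq field_simps)
  finally have IKe: "I K \<le> \<epsilon>" .
  have Nk: "real (N k) \<le> real K powr a" if "k \<in> {1..K}" for k
  proof -
    have k1: "k \<ge> 1" "k \<le> K" using that by auto
    have "real (N k) = real (nat \<lfloor>real k powr a\<rfloor>)" using Nd k1 by simp
    also have "\<dots> \<le> real k powr a"
      by (simp add: of_nat_nat)
    also have "\<dots> \<le> real K powr a" using k1 a1 by (intro powr_mono2) auto
    finally show ?thesis .
  qed
  have "real (\<Sum>k=1..K. N k) = (\<Sum>k=1..K. real (N k))" by simp
  also have "\<dots> \<le> (\<Sum>k=1..K. real K powr a)" by (rule sum_mono[OF Nk])
  also have "\<dots> = real K * real K powr a" by simp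
  also have "\<dots> = real K powr (a + 1)" using Kpos by (simp add: powr_add)
  also have "\<dots> \<le> ((c + 2) / \<epsilon>) powr (a + 1)"
  proof (rule powr_mono2)
    show "0 \<le> a + 1" using a1 by simp
    show "0 \<le> real K" by simp
    have "c / \<epsilon> + 2 \<le> (c + 2) / \<epsilon>" using eps by (simp add: field_simps)
    thus "real K \<le> (c + 2) / \<epsilon>" using Kle by linarith
  qed
  also have "\<dots> = (c + 2) powr (a + 1) / \<epsilon> powr (a + 1)"
    using c0 eps by (simp add: powr_divide)
  finally show "\<exists>K\<ge>1. I K \<le> \<epsilon> \<and> real (\<Sum>k=1..K. N k) \<le> (c + 2) powr (a + 1) / \<epsilon> powr (a + 1)"
    using K1 IKe by blast
qed


theorem theorem2:
  fixes X :: "(real^'n) set"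
    and F :: "real^'n \<Rightarrow> real^'n"
    and Fs :: "real^'n \<Rightarrow> 'w \<Rightarrow> real^'n"
    and M :: "'s measure"
    and Fk :: "nat \<Rightarrow> 's measure"
    and om :: "nat \<Rightarrow> nat \<Rightarrow> 's \<Rightarrow> 'w"
    and N :: "nat \<Rightarrow> nat"
    and xm1 x0 :: "real^'n"
    and DX L C \<nu>1 \<nu>2 \<gamma> Mb :: real
  defines "x \<equiv> sprg_x X \<gamma> N Fs om xm1 x0"
    and "y \<equiv> sprg_y X \<gamma> N Fs om xm1 x0"
    and "xbar \<equiv> sprg_xbar X \<gamma> N Fs om xm1 x0"
    and "w \<equiv> (\<lambda>j k s. Fs (sprg_y X \<gamma> N Fs om xm1 x0 k s) (om j k s) - F (sprg_y X \<gamma> N Fs om xm1 x0 k s))"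
  assumes X_ne: "X \<noteq> {}" and X_closed: "closed X" and X_convex: "convex X"
    and DX_pos: "DX > 0" and X_diam: "\<forall>u\<in>X. \<forall>v\<in>X. (norm (u - v))\<^sup>2 \<le> DX\<^sup>2"
    \<comment> \<open>(A1)\<close>
    and L_pos: "L > 0" and F_lip: "L-lipschitz_on UNIV F" and F_mono: "monotone_map F"
    \<comment> \<open>(A2)\<close>
    and sol_ne: "VI_sol X F \<noteq> {}" and sol_compact: "compact (VI_sol X F)"
    and C_pos: "C > 0" and sol_bound: "\<forall>xs\<in>VI_sol X F. norm (F xs) \<le> C"
    \<comment> \<open>probability space and filtration (history before iteration k's samples)\<close>
    and prob: "prob_space M"
    and filt_sub: "\<And>k. subalgebra M (Fk k)"
    and filt_mono: "\<And>k. sets (Fk k) \<subseteq> sets (Fk (Suc k))"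
    and x_adapted: "\<And>k. x k \<in> borel_measurable (Fk k)"
    and samples_adapted: "\<And>k j. j < N k \<Longrightarrow> (\<lambda>s. Fs (y k s) (om j k s)) \<in> borel_measurable (Fk (Suc k))"
    \<comment> \<open>(A4)\<close>
    and nu_nonneg: "\<nu>1 \<ge> 0" "\<nu>2 \<ge> 0"
    and w_int: "\<And>k j. j < N k \<Longrightarrow> integrable M (w j k)"
    and w_mean: "\<And>k j i. j < N k \<Longrightarrow>
        AE s in M. real_cond_exp M (Fk k) (\<lambda>s. w j k s $ i) s = 0"
    and w_var: "\<And>k j. j < N k \<Longrightarrow>
        AE s in M. nn_cond_exp M (Fk k) (\<lambda>s. ennreal ((norm (w j k s))\<^sup>2)) s
                     \<le> ennreal (\<nu>1\<^sup>2 * (norm (y k s))\<^sup>2 + \<nu>2\<^sup>2)"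
    and w_uncorr: "\<And>k i j. i < N k \<Longrightarrow> j < N k \<Longrightarrow> i \<noteq> j \<Longrightarrow>
        AE s in M. real_cond_exp M (Fk k) (\<lambda>s. w i k s \<bullet> w j k s) s = 0"
    \<comment> \<open>initial points, step size, batch sizes\<close>
    and xm1_X: "xm1 \<in> X" and x0_X: "x0 \<in> X"
    and N0_pos: "N 0 > 0" and N_mono: "mono N"
    and gamma_pos: "\<gamma> > 0"
    and gamma_le: "\<gamma> \<le> 1 / (8 * sqrt (L\<^sup>2 + 10 * \<nu>1\<^sup>2 / real (N 0)))"
    and N_summ: "summable (\<lambda>k. 1 / real (N (Suc k)))"
    and N_sum_lt: "(\<Sum>k. 1 / real (N (Suc k))) < Mb"
  shows "(\<exists>c. \<forall>K\<ge>1. (\<integral>s. gap_fun X F (xbar K s) \<partial>M) \<le> c / real K)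
       \<and> (\<forall>a>1. (\<forall>k\<ge>1. N k = nat \<lfloor>real k powr a\<rfloor>) \<longrightarrow>
            (\<exists>c'. \<forall>\<epsilon>. 0 < \<epsilon> \<and> \<epsilon> \<le> 1 \<longrightarrow>
               (\<exists>K\<ge>1. (\<integral>s. gap_fun X F (xbar K s) \<partial>M) \<le> \<epsilon>
                      \<and> real (\<Sum>k=1..K. N k) \<le> c' / \<epsilon> powr (a + 1))))"
proof -
  interpret P: prob_space M by (rule prob)
  define prev where "prev = sprg_prev X \<gamma> N Fs om xm1 x0"
  have prev0: "prev 0 s = xm1" for s unfolding prev_def by simp
  have prevS: "prev (Suc k) s = x k s" for k s unfolding prev_def x_def by simp
  have x0s: "x 0 s = x0" for s unfolding x_def by simp
  have y_eq: "y k s = 2 *\<^sub>R x k s - prev k s" for k s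
    unfolding y_def sprg_y_def x_def prev_def by simp
  have w_eq: "w j k s = Fs (y k s) (om j k s) - F (y k s)" for j k s
    unfolding w_def y_def by simp
  have Npos: "N k > 0" for k using monoD[OF N_mono, of 0 k] N0_pos by simp
  define e where "e k s = (1 / real (N k)) *\<^sub>R (\<Sum>j<N k. w j k s)" for k s
  have Fe: "F (y k s) + e k s = (1 / real (N k)) *\<^sub>R (\<Sum>j<N k. Fs (y k s) (om j k s))" for k s
  proof -
    have "(\<Sum>j<N k. w j k s) = (\<Sum>j<N k. Fs (y k s) (om j k s)) - real (N k) *\<^sub>R F (y k s)"
      by (simp add: w_eq sum_subtractf scaleR_conv_of_real)
    thus ?thesis using Npos[of k] unfolding e_def by (simp add: scaleR_diff_right)
  qed
  have rec: "x (Suc k) s = closest_point X (x k s - \<gamma> *\<^sub>R (F (2 *\<^sub>R x k s - prev k s) + e k s))" for k s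
  proof -
    have "x (Suc k) s = closest_point X (x k s - (\<gamma> / real (N k)) *\<^sub>R (\<Sum>j<N k. Fs (y k s) (om j k s)))"
      unfolding x_def y_def sprg_y_def prev_def by simp
    also have "(\<gamma> / real (N k)) *\<^sub>R (\<Sum>j<N k. Fs (y k s) (om j k s)) = \<gamma> *\<^sub>R (F (y k s) + e k s)"
      unfolding Fe by simp
    finally show ?thesis unfolding y_eq .
  qed
  have xX: "x k s \<in> X" for k s
  proof (cases k)
    case 0 then show ?thesis using x0_X x0s by simp
  next
    case (Suc m) then show ?thesis using rec[of m s] closest_point_in_set[OF X_closed X_ne] by simp
  qed
  have prevX: "prev k s \<in> X" for k s by (cases k) (simp_all add: prev0 prevS xm1_X xX)
  have diam: "norm (u - v) \<le> DX" if "u \<in> X" "v \<in> X" for u v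
    using X_diam that DX_pos by (meson less_imp_le power2_le_imp_le)
  define R where "R = norm x0 + DX"
  have Rb: "norm u \<le> R" if "u \<in> X" for u
    using norm_triangle_ineq2[of u x0] diam[OF that x0_X] unfolding R_def by linarith
  have R0: "R \<ge> 0" unfolding R_def using DX_pos by simp
  have Lip: "norm (F u - F v) \<le> L * norm (u - v)" for u v
    using lipschitz_onD[OF F_lip, of u v] by (simp add: dist_norm)
  define BF where "BF = norm (F x0) + L * DX"
  have BFb: "norm (F u) \<le> BF" if "u \<in> X" for u
  proof -
    have "norm (F u) \<le> norm (F x0) + norm (F u - F x0)" by (rule norm_triangle_sub)
    also have "\<dots> \<le> norm (F x0) + L * DX"
      using Lip[of u x0] diam[OF that x0_X] L_pos by (smt (verit) mult_left_mono)
    finally show ?thesis unfolding BF_def .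
  qed
  have BF0: "BF \<ge> 0" unfolding BF_def using L_pos DX_pos by simp
  have monoF: "inner (F u - F v) (u - v) \<ge> 0" for u v
    using F_mono unfolding monotone_map_def by blast
  have gL: "\<gamma> * L \<le> 1/8"
  proof -
    have q: "L \<le> sqrt (L\<^sup>2 + 10 * \<nu>1\<^sup>2 / real (N 0))"
      using L_pos by (intro real_le_rsqrt) auto
    have qp: "sqrt (L\<^sup>2 + 10 * \<nu>1\<^sup>2 / real (N 0)) > 0" using L_pos q by linarith
    have "\<gamma> * L \<le> (1 / (8 * sqrt (L\<^sup>2 + 10 * \<nu>1\<^sup>2 / real (N 0)))) * sqrt (L\<^sup>2 + 10 * \<nu>1\<^sup>2 / real (N 0))"
      using gamma_le q gamma_pos L_pos by (intro mult_mono) auto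
    also have "\<dots> = 1/8" using qp by simp
    finally show ?thesis .
  qed
  define B0 where "B0 = BF * (2 * DX)"
  have B0b: "inner (F (2 *\<^sub>R x0 - xm1)) ((2 *\<^sub>R x0 - xm1) - z) \<le> B0" if zX: "z \<in> X" for z
  proof -
    have nF: "norm (F (2 *\<^sub>R x0 - xm1)) \<le> BF"
    proof -
      have "norm (F (2 *\<^sub>R x0 - xm1)) \<le> norm (F x0) + norm (F (2 *\<^sub>R x0 - xm1) - F x0)" by (rule norm_triangle_sub)
      also have "norm (F (2 *\<^sub>R x0 - xm1) - F x0) \<le> L * norm ((2 *\<^sub>R x0 - xm1) - x0)" by (rule Lip)
      also have "(2 *\<^sub>R x0 - xm1) - x0 = x0 - xm1" by (simp add: scaleR_2)
      also have "L * norm (x0 - xm1) \<le> L * DX" using diam[OF x0_X xm1_X] L_pos by simp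
      finally show ?thesis unfolding BF_def by simp
    qed
    have nd: "norm ((2 *\<^sub>R x0 - xm1) - z) \<le> 2 * DX"
    proof -
      have "(2 *\<^sub>R x0 - xm1) - z = (x0 - z) + (x0 - xm1)" by (simp add: scaleR_2 algebra_simps)
      hence "norm ((2 *\<^sub>R x0 - xm1) - z) \<le> norm (x0 - z) + norm (x0 - xm1)" by (metis norm_triangle_ineq)
      thus ?thesis using diam[OF x0_X zX] diam[OF x0_X xm1_X] by linarith
    qed
    have "inner (F (2 *\<^sub>R x0 - xm1)) ((2 *\<^sub>R x0 - xm1) - z) \<le> norm (F (2 *\<^sub>R x0 - xm1)) * norm ((2 *\<^sub>R x0 - xm1) - z)"
      by (metis abs_le_D1 Cauchy_Schwarz_ineq2)
    also have "\<dots> \<le> BF * (2 * DX)" using nF nd BF0 by (intro mult_mono) auto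
    finally show ?thesis unfolding B0_def .
  qed
  define C1 where "C1 = BF * DX + B0 + 3 * DX\<^sup>2 / (4 * \<gamma>)"
  define S where "S n s = (\<Sum>m<n. e (Suc m) s)" for n s
  define T where "T n s = (\<Sum>m<n. inner (e (Suc m) s) (y (Suc m) s))" for n s
  define RHS where "RHS n s = C1 + 3 * \<gamma> * (\<Sum>k<Suc n. (norm (e k s))\<^sup>2) + R * norm (S n s) - T n s" for n s
  have pw: "gap_fun X F (xbar (Suc n) s) \<le> RHS n s / real (Suc n)" for n s
  proof -
    have "gap_fun X F (xbar (Suc n) s) = (SUP z\<in>X. inner (F z) (xbar (Suc n) s - z))"
      unfolding gap_fun_def ..
    also have "\<dots> \<le> RHS n s / real (Suc n)"
    proof (rule cSUP_least[OF X_ne])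
      fix z assume zX: "z \<in> X"
      have db: "(\<Sum>k<Suc n. inner (F z) (x k s - z)) \<le> RHS n s"
        using det_bound[where xs="\<lambda>k. x k s" and pv="\<lambda>k. prev k s" and e="\<lambda>k. e k s" and F=F and X=X and z=z and n=n,
            OF X_convex X_closed xX zX prevX prevS rec Lip monoF gamma_pos less_imp_le[OF L_pos] gL diam Rb BFb]
          B0b[OF zX]
        unfolding RHS_def C1_def S_def T_def y_eq x0s prev0 by simp
      have xz: "xbar (Suc n) s - z = (1 / real (Suc n)) *\<^sub>R (\<Sum>k<Suc n. x k s - z)"
      proof -
        have xb: "xbar (Suc n) s = (1 / real (Suc n)) *\<^sub>R (\<Sum>k<Suc n. x k s)"
          unfolding xbar_def sprg_xbar_def x_def by simp
        have zc: "(\<Sum>k<Suc n. z) = real (Suc n) *\<^sub>R z" by (simp only: sum_constant_scaleR card_lessThan)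
        have zz: "(1 / real (Suc n)) *\<^sub>R (real (Suc n) *\<^sub>R z) = z" by simp
        show ?thesis by (simp only: xb sum_subtractf zc scaleR_diff_right zz)
      qed
      have "inner (F z) (xbar (Suc n) s - z) = (\<Sum>k<Suc n. inner (F z) (x k s - z)) / real (Suc n)"
        unfolding xz inner_scaleR_right inner_sum_right by (simp del: sum.lessThan_Suc)
      also have "\<dots> \<le> RHS n s / real (Suc n)" using db by (simp add: divide_right_mono)
      finally show "inner (F z) (xbar (Suc n) s - z) \<le> RHS n s / real (Suc n)" .
    qed
    finally show ?thesis .
  qed
  have sfs: "sigma_finite_subalgebra M (Fk k)" for k by (rule sfs_of_prob[OF prob filt_sub])
  have spaceF: "space (Fk k) = space M" for k using filt_sub[of k] unfolding subalgebra_def by simp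
  have setsF: "sets (Fk k) \<subseteq> sets (Fk l)" if "k \<le> l" for k l
    using lift_Suc_mono_le[of "\<lambda>k. sets (Fk k)", OF filt_mono that] .
  have measF: "f \<in> borel_measurable (Fk l)" if "f \<in> borel_measurable (Fk k)" "k \<le> l" for f :: "'s \<Rightarrow> real^'n" and k l
  proof -
    have "subalgebra (Fk l) (Fk k)" unfolding subalgebra_def using setsF[OF that(2)] spaceF by simp
    from measurable_from_subalg[OF this that(1)] show ?thesis .
  qed
  have measFr: "f \<in> borel_measurable (Fk l)" if "f \<in> borel_measurable (Fk k)" "k \<le> l" for f :: "'s \<Rightarrow> real" and k l
  proof -
    have "subalgebra (Fk l) (Fk k)" unfolding subalgebra_def using setsF[OF that(2)] spaceF by simp
    from measurable_from_subalg[OF this that(1)] show ?thesis .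
  qed
  have measM: "f \<in> borel_measurable M" if "f \<in> borel_measurable (Fk k)" for f :: "'s \<Rightarrow> real^'n" and k
    by (rule measurable_from_subalg[OF filt_sub that])
  have prev_m: "prev k \<in> borel_measurable (Fk k)" for k
  proof (cases k)
    case 0
    have "prev 0 = (\<lambda>s. xm1)" using prev0 by auto
    then show ?thesis using 0 by simp
  next
    case (Suc m)
    have "prev (Suc m) = x m" using prevS by auto
    then show ?thesis using Suc measF[OF x_adapted[of m], of "Suc m"] by simp
  qed
  have y_m: "y k \<in> borel_measurable (Fk k)" for k
  proof -
    have "y k = (\<lambda>s. 2 *\<^sub>R x k s - prev k s)" using y_eq by auto
    thus ?thesis using x_adapted[of k] prev_m[of k] by simp
  qed
  have Fb: "F \<in> borel_measurable borel"
    by (rule borel_measurable_continuous_onI[OF lipschitz_on_continuous_on[OF F_lip]])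
  have wm: "w j k \<in> borel_measurable M" if "j < N k" for j k
    using w_int[OF that] by (rule borel_measurable_integrable)
  have wF: "w j k \<in> borel_measurable (Fk (Suc k))" if "j < N k" for j k
  proof -
    have "w j k = (\<lambda>s. Fs (y k s) (om j k s) - F (y k s))" using w_eq by auto
    moreover have "(\<lambda>s. F (y k s)) \<in> borel_measurable (Fk (Suc k))"
      using measurable_compose[OF measF[OF y_m[of k], of "Suc k"] Fb] by simp
    ultimately show ?thesis using samples_adapted[OF that] by simp
  qed
  have eF: "e k \<in> borel_measurable (Fk (Suc k))" for k
  proof -
    have "e k = (\<lambda>s. (1 / real (N k)) *\<^sub>R (\<Sum>j<N k. w j k s))" using e_def by auto
    thus ?thesis using wF by simp
  qed
  have eM: "e k \<in> borel_measurable M" for k by (rule measM[OF eF])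
  have ynorm: "norm (y k s) \<le> 3 * R" for k s
  proof -
    have "norm (y k s) \<le> norm (2 *\<^sub>R x k s) + norm (prev k s)" unfolding y_eq by (rule norm_triangle_ineq4)
    also have "\<dots> \<le> 2 * R + R" using Rb[OF xX[of k s]] Rb[OF prevX[of k s]] by simp
    finally show ?thesis by simp
  qed
  define \<sigma>2 where "\<sigma>2 = \<nu>1\<^sup>2 * (3 * R)\<^sup>2 + \<nu>2\<^sup>2"
  have s20: "\<sigma>2 \<ge> 0" unfolding \<sigma>2_def by simp
  have wsq: "integrable M (\<lambda>s. (norm (w j k s))\<^sup>2) \<and> (\<integral>s. (norm (w j k s))\<^sup>2 \<partial>M) \<le> \<sigma>2" if "j < N k" for j k
  proof -
    have "AE s in M. nn_cond_exp M (Fk k) (\<lambda>s. ennreal ((norm (w j k s))\<^sup>2)) s \<le> ennreal \<sigma>2"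
      using w_var[OF that]
    proof (rule AE_mp, intro AE_I2 impI)
      fix s assume h: "nn_cond_exp M (Fk k) (\<lambda>s. ennreal ((norm (w j k s))\<^sup>2)) s \<le> ennreal (\<nu>1\<^sup>2 * (norm (y k s))\<^sup>2 + \<nu>2\<^sup>2)"
      have "(norm (y k s))\<^sup>2 \<le> (3 * R)\<^sup>2" using ynorm[of k s] by (intro power_mono) auto
      hence "\<nu>1\<^sup>2 * (norm (y k s))\<^sup>2 + \<nu>2\<^sup>2 \<le> \<sigma>2" unfolding \<sigma>2_def by (simp add: mult_left_mono)
      hence "ennreal (\<nu>1\<^sup>2 * (norm (y k s))\<^sup>2 + \<nu>2\<^sup>2) \<le> ennreal \<sigma>2" by (rule ennreal_leI)
      with h show "nn_cond_exp M (Fk k) (\<lambda>s. ennreal ((norm (w j k s))\<^sup>2)) s \<le> ennreal \<sigma>2" by (rule order_trans)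
    qed
    from sq_bound[OF prob sfs wm[OF that] this s20] show ?thesis by simp
  qed
  have wij: "(\<integral>s. inner (w i k s) (w j k s) \<partial>M) = 0" if "i < N k" "j < N k" "i \<noteq> j" for i j k
  proof (rule uncorr_int[OF sfs[of k]])
    show "integrable M (\<lambda>s. inner (w i k s) (w j k s))"
      using int_inner_sq[OF wm[OF that(1)] wm[OF that(2)]] wsq that by blast
    show "AE s in M. real_cond_exp M (Fk k) (\<lambda>s. inner (w i k s) (w j k s)) s = 0"
      by (rule w_uncorr[OF that])
  qed
  have esq: "integrable M (\<lambda>s. (norm (e k s))\<^sup>2) \<and> (\<integral>s. (norm (e k s))\<^sup>2 \<partial>M) \<le> \<sigma>2 / real (N k)" for k
  proof -
    have os: "integrable M (\<lambda>s. (norm (\<Sum>j\<in>{..<N k}. w j k s))\<^sup>2)"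
      "(\<integral>s. (norm (\<Sum>j\<in>{..<N k}. w j k s))\<^sup>2 \<partial>M) = (\<Sum>j\<in>{..<N k}. \<integral>s. (norm (w j k s))\<^sup>2 \<partial>M)"
      by (rule orth_sum[where ws="\<lambda>j. w j k"]; use wm wsq wij in auto)+
    have eq: "(norm (e k s))\<^sup>2 = (1 / real (N k))\<^sup>2 * (norm (\<Sum>j\<in>{..<N k}. w j k s))\<^sup>2" for s
      unfolding e_def by (simp add: power_mult_distrib power_divide)
    have "(\<Sum>j\<in>{..<N k}. \<integral>s. (norm (w j k s))\<^sup>2 \<partial>M) \<le> (\<Sum>j\<in>{..<N k}. \<sigma>2)"
      using wsq by (intro sum_mono) auto
    hence le: "(\<integral>s. (norm (\<Sum>j\<in>{..<N k}. w j k s))\<^sup>2 \<partial>M) \<le> real (N k) * \<sigma>2" using os(2) by simp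
    have "(\<integral>s. (norm (e k s))\<^sup>2 \<partial>M) = (1 / real (N k))\<^sup>2 * (\<integral>s. (norm (\<Sum>j\<in>{..<N k}. w j k s))\<^sup>2 \<partial>M)"
      unfolding eq by simp
    also have "\<dots> \<le> (1 / real (N k))\<^sup>2 * (real (N k) * \<sigma>2)" using le by (intro mult_left_mono) auto
    also have "\<dots> = \<sigma>2 / real (N k)" using Npos[of k] by (simp add: power2_eq_square field_simps)
    finally show ?thesis unfolding eq using os(1) by simp
  qed
  have wsqI: "integrable M (\<lambda>s. (norm (w j k s))\<^sup>2)" if "j < N k" for j k using wsq[OF that] by blast
  have esqI: "integrable M (\<lambda>s. (norm (e k s))\<^sup>2)" for k using esq[of k] by blast
  have ysqI: "integrable M (\<lambda>s. (norm (y k s))\<^sup>2)" for k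
  proof (rule P.integrable_const_bound[where B="(3 * R)\<^sup>2"])
    show "AE s in M. norm ((norm (y k s))\<^sup>2) \<le> (3 * R)\<^sup>2"
    proof (intro AE_I2)
      fix s
      have "(norm (y k s))\<^sup>2 \<le> (3 * R)\<^sup>2" using ynorm[of k s] by (intro power_mono) auto
      thus "norm ((norm (y k s))\<^sup>2) \<le> (3 * R)\<^sup>2" by simp
    qed
    show "(\<lambda>s. (norm (y k s))\<^sup>2) \<in> borel_measurable M" using measM[OF y_m[of k]] by measurable
  qed
  have eorth: "(\<integral>s. inner (e k s) (e l s) \<partial>M) = 0" if "k < l" for k l
  proof -
    have ii: "integrable M (\<lambda>s. inner (e k s) (w j l s))" if "j < N l" for j
      by (rule int_inner_sq[OF eM wm[OF that] esqI wsqI[OF that]])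
    have z: "(\<integral>s. inner (e k s) (w j l s) \<partial>M) = 0" if "j < N l" for j
    proof (rule inner_zero_cond[OF sfs[of l] _ wm[OF that] w_mean[OF that]])
      show "e k \<in> borel_measurable (Fk l)" using measF[OF eF[of k], of l] \<open>k < l\<close> by simp
      show "integrable M (\<lambda>s. e k s $ i * w j l s $ i)" for i
        by (rule int_comp_sq[OF eM wm[OF that] esqI wsqI[OF that]])
    qed
    have "(\<integral>s. inner (e k s) (e l s) \<partial>M) = (\<integral>s. (1 / real (N l)) * (\<Sum>j<N l. inner (e k s) (w j l s)) \<partial>M)"
      unfolding e_def[of l] inner_scaleR_right inner_sum_right ..
    also have "\<dots> = (1 / real (N l)) * (\<Sum>j<N l. \<integral>s. inner (e k s) (w j l s) \<partial>M)"
      using ii by (simp add: Bochner_Integration.integral_sum)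
    also have "\<dots> = 0" using z by simp
    finally show ?thesis .
  qed
  have eyz: "(\<integral>s. inner (e k s) (y k s) \<partial>M) = 0" for k
  proof -
    have ii: "integrable M (\<lambda>s. inner (y k s) (w j k s))" if "j < N k" for j
      by (rule int_inner_sq[OF measM[OF y_m] wm[OF that] ysqI wsqI[OF that]])
    have z: "(\<integral>s. inner (y k s) (w j k s) \<partial>M) = 0" if "j < N k" for j
    proof (rule inner_zero_cond[OF sfs[of k] y_m wm[OF that] w_mean[OF that]])
      show "integrable M (\<lambda>s. y k s $ i * w j k s $ i)" for i
        by (rule int_comp_sq[OF measM[OF y_m] wm[OF that] ysqI wsqI[OF that]])
    qed
    have "(\<integral>s. inner (e k s) (y k s) \<partial>M) = (\<integral>s. (1 / real (N k)) * (\<Sum>j<N k. inner (y k s) (w j k s)) \<partial>M)"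
      by (subst inner_commute) (simp only: e_def inner_scaleR_right inner_sum_right)
    also have "\<dots> = (1 / real (N k)) * (\<Sum>j<N k. \<integral>s. inner (y k s) (w j k s) \<partial>M)"
      using ii by (simp add: Bochner_Integration.integral_sum)
    also have "\<dots> = 0" using z by simp
    finally show ?thesis .
  qed
  have sumN: "(\<Sum>m<n. 1 / real (N (Suc m))) \<le> Mb" for n
  proof -
    have "(\<Sum>m<n. 1 / real (N (Suc m))) \<le> (\<Sum>k. 1 / real (N (Suc k)))"
      by (rule sum_le_suminf[OF N_summ]) auto
    thus ?thesis using N_sum_lt by linarith
  qed
  have Mb0: "Mb > 0"
  proof -
    have "0 \<le> (\<Sum>k. 1 / real (N (Suc k)))" by (rule suminf_nonneg[OF N_summ]) simp
    thus ?thesis using N_sum_lt by linarith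
  qed
  have Ssq: "integrable M (\<lambda>s. (norm (S n s))\<^sup>2) \<and> (\<integral>s. (norm (S n s))\<^sup>2 \<partial>M) \<le> \<sigma>2 * Mb" for n
  proof -
    have orth: "(\<integral>s. inner (e (Suc i) s) (e (Suc j) s) \<partial>M) = 0" if "i \<noteq> j" for i j
    proof (cases "i < j")
      case True then show ?thesis using eorth[of "Suc i" "Suc j"] by simp
    next
      case False
      hence "Suc j < Suc i" using that by simp
      then show ?thesis using eorth[of "Suc j" "Suc i"] by (simp add: inner_commute)
    qed
    have os: "integrable M (\<lambda>s. (norm (\<Sum>m\<in>{..<n}. e (Suc m) s))\<^sup>2)"
      "(\<integral>s. (norm (\<Sum>m\<in>{..<n}. e (Suc m) s))\<^sup>2 \<partial>M) = (\<Sum>m\<in>{..<n}. \<integral>s. (norm (e (Suc m) s))\<^sup>2 \<partial>M)"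
      by (rule orth_sum[where ws="\<lambda>m. e (Suc m)"]; use eM esqI orth in auto)+
    have "(\<Sum>m\<in>{..<n}. \<integral>s. (norm (e (Suc m) s))\<^sup>2 \<partial>M) \<le> (\<Sum>m\<in>{..<n}. \<sigma>2 * (1 / real (N (Suc m))))"
      using esq by (intro sum_mono) auto
    also have "\<dots> = \<sigma>2 * (\<Sum>m<n. 1 / real (N (Suc m)))" by (simp add: sum_distrib_left)
    also have "\<dots> \<le> \<sigma>2 * Mb" using sumN[of n] s20 by (intro mult_left_mono) auto
    finally show ?thesis using os unfolding S_def by simp
  qed
  define c where "c = C1 + 3 * \<gamma> * (\<sigma>2 * (1 / real (N 0) + Mb)) + R * ((1 + \<sigma>2 * Mb) / 2)"
  have c0: "c \<ge> 0"
  proof -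
    have "C1 \<ge> 0" unfolding C1_def B0_def using BF0 DX_pos gamma_pos by simp
    moreover have "3 * \<gamma> * (\<sigma>2 * (1 / real (N 0) + Mb)) \<ge> 0" using gamma_pos s20 Mb0 by simp
    moreover have "R * ((1 + \<sigma>2 * Mb) / 2) \<ge> 0" using R0 s20 Mb0 by simp
    ultimately show ?thesis unfolding c_def by linarith
  qed
  have RHSint: "integrable M (RHS n) \<and> (\<integral>s. RHS n s \<partial>M) \<le> c" for n
  proof -
    have I1: "integrable M (\<lambda>s. \<Sum>k<Suc n. (norm (e k s))\<^sup>2)"
      using esqI by (intro Bochner_Integration.integrable_sum) auto
    have Sm: "S n \<in> borel_measurable M"
    proof -
      have "S n = (\<lambda>s. \<Sum>m<n. e (Suc m) s)" using S_def by auto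
      thus ?thesis using eM by simp
    qed
    have Sb: "norm (S n s) \<le> (1 + (norm (S n s))\<^sup>2) / 2" for s
      using sum_squares_bound[of 1 "norm (S n s)"] by (simp add: power2_eq_square)
    have I2b: "integrable M (\<lambda>s. (1 + (norm (S n s))\<^sup>2) / 2)" using Ssq[of n] by auto
    have I2: "integrable M (\<lambda>s. norm (S n s))"
    proof (rule Bochner_Integration.integrable_bound[OF I2b])
      show "(\<lambda>s. norm (S n s)) \<in> borel_measurable M" using Sm by measurable
      show "AE s in M. norm (norm (S n s)) \<le> norm ((1 + (norm (S n s))\<^sup>2) / 2)"
      proof (intro AE_I2)
        fix s
        have "0 \<le> (1 + (norm (S n s))\<^sup>2) / 2" by simp
        hence "norm ((1 + (norm (S n s))\<^sup>2) / 2) = (1 + (norm (S n s))\<^sup>2) / 2" by (simp only: real_norm_def abs_of_nonneg)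
        thus "norm (norm (S n s)) \<le> norm ((1 + (norm (S n s))\<^sup>2) / 2)" using Sb[of s] by simp
      qed
    qed
    have I3i: "integrable M (\<lambda>s. inner (e (Suc m) s) (y (Suc m) s))" for m
      by (rule int_inner_sq[OF eM measM[OF y_m] esqI ysqI])
    have I3: "integrable M (T n)"
    proof -
      have "T n = (\<lambda>s. \<Sum>m<n. inner (e (Suc m) s) (y (Suc m) s))" using T_def by auto
      thus ?thesis using I3i by (simp add: Bochner_Integration.integrable_sum)
    qed
    have ET: "(\<integral>s. T n s \<partial>M) = 0"
      unfolding T_def using I3i eyz by (simp add: Bochner_Integration.integral_sum)
    have EE: "(\<integral>s. (\<Sum>k<Suc n. (norm (e k s))\<^sup>2) \<partial>M) \<le> \<sigma>2 * (1 / real (N 0) + Mb)"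
    proof -
      have "(\<integral>s. (\<Sum>k<Suc n. (norm (e k s))\<^sup>2) \<partial>M) = (\<Sum>k<Suc n. \<integral>s. (norm (e k s))\<^sup>2 \<partial>M)"
        using esqI by (simp add: Bochner_Integration.integral_sum del: sum.lessThan_Suc)
      also have "\<dots> \<le> (\<Sum>k<Suc n. \<sigma>2 * (1 / real (N k)))"
        using esq by (intro sum_mono) auto
      also have "\<dots> = \<sigma>2 * (1 / real (N 0) + (\<Sum>m<n. 1 / real (N (Suc m))))"
        by (simp only: sum.lessThan_Suc_shift sum_distrib_left[symmetric] distrib_left)
      also have "\<dots> \<le> \<sigma>2 * (1 / real (N 0) + Mb)" using sumN[of n] s20 by (intro mult_left_mono) auto
      finally show ?thesis .
    qed
    have ES: "(\<integral>s. norm (S n s) \<partial>M) \<le> (1 + \<sigma>2 * Mb) / 2"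
    proof -
      have "(\<integral>s. norm (S n s) \<partial>M) \<le> (\<integral>s. (1 + (norm (S n s))\<^sup>2) / 2 \<partial>M)"
        by (rule integral_mono[OF I2 I2b Sb])
      also have "\<dots> = (1 + (\<integral>s. (norm (S n s))\<^sup>2 \<partial>M)) / 2"
        using Ssq[of n] by (simp add: P.prob_space)
      also have "\<dots> \<le> (1 + \<sigma>2 * Mb) / 2" using Ssq[of n] by simp
      finally show ?thesis .
    qed
    have RHS_eq: "RHS n = (\<lambda>s. C1 + 3 * \<gamma> * (\<Sum>k<Suc n. (norm (e k s))\<^sup>2) + R * norm (S n s) - T n s)"
      using RHS_def by auto
    have IR: "integrable M (RHS n)" unfolding RHS_eq using I1 I2 I3 by (simp del: sum.lessThan_Suc)
    have "(\<integral>s. RHS n s \<partial>M) = C1 + 3 * \<gamma> * (\<integral>s. (\<Sum>k<Suc n. (norm (e k s))\<^sup>2) \<partial>M) + R * (\<integral>s. norm (S n s) \<partial>M) - (\<integral>s. T n s \<partial>M)"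
      unfolding RHS_eq using I1 I2 I3 by (simp add: P.prob_space del: sum.lessThan_Suc)
    also have "\<dots> \<le> c"
    proof -
      have h1: "3 * \<gamma> * (\<integral>s. (\<Sum>k<Suc n. (norm (e k s))\<^sup>2) \<partial>M) \<le> 3 * \<gamma> * (\<sigma>2 * (1 / real (N 0) + Mb))"
        using EE gamma_pos by (intro mult_left_mono) auto
      have h2: "R * (\<integral>s. norm (S n s) \<partial>M) \<le> R * ((1 + \<sigma>2 * Mb) / 2)"
        using ES R0 by (intro mult_left_mono) auto
      show ?thesis unfolding c_def ET using h1 h2 by linarith
    qed
    finally show ?thesis using IR by simp
  qed
  have partA: "\<forall>K\<ge>1. (\<integral>s. gap_fun X F (xbar K s) \<partial>M) \<le> c / real K"
  proof (intro allI impI)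
    fix K :: nat assume K1: "K \<ge> 1"
    then obtain n where Kn: "K = Suc n" by (cases K) auto
    show "(\<integral>s. gap_fun X F (xbar K s) \<partial>M) \<le> c / real K"
    proof (cases "integrable M (\<lambda>s. gap_fun X F (xbar K s))")
      case True
      have "(\<integral>s. gap_fun X F (xbar K s) \<partial>M) \<le> (\<integral>s. RHS n s / real (Suc n) \<partial>M)"
        using True RHSint[of n] pw unfolding Kn by (intro integral_mono) auto
      also have "\<dots> = (\<integral>s. RHS n s \<partial>M) / real (Suc n)" by simp
      also have "\<dots> \<le> c / real (Suc n)" using RHSint[of n] by (intro divide_right_mono) auto
      finally show ?thesis unfolding Kn .
    next
      case False
      hence "(\<integral>s. gap_fun X F (xbar K s) \<partial>M) = 0" by (rule not_integrable_integral_eq)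
      thus ?thesis using c0 by simp
    qed
  qed
  show ?thesis
  proof (rule conjI)
    show "\<exists>c. \<forall>K\<ge>1. (\<integral>s. gap_fun X F (xbar K s) \<partial>M) \<le> c / real K" using partA by blast
    show "\<forall>a>1. (\<forall>k\<ge>1. N k = nat \<lfloor>real k powr a\<rfloor>) \<longrightarrow>
            (\<exists>c'. \<forall>\<epsilon>. 0 < \<epsilon> \<and> \<epsilon> \<le> 1 \<longrightarrow>
               (\<exists>K\<ge>1. (\<integral>s. gap_fun X F (xbar K s) \<partial>M) \<le> \<epsilon>
                      \<and> real (\<Sum>k=1..K. N k) \<le> c' / \<epsilon> powr (a + 1)))"
      using partB[OF c0 partA] by blast
  qed
qed

end
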